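(* Let $\Gamma$ be a distance-regular graph with diameter $D\ge3$ and valency $k$, which is neither bipartite nor almost bipartite. Let $\theta,\theta'$ be real numbers other than $k$ such that the pair $\theta,\theta'$ is tight. Then $\theta\neq\theta'$.
   Context: $\Gamma$ is a finite connected undirected graph without loops or multiple edges, distance-regular with diameter $D$, intersection numbers $a_i,b_i,c_i$ ($c_0=0$, $b_D=0$), valency $k$, $c_i+a_i+b_i=k$. Bipartite: $a_i=0$ for $0\le i\le D$; almost bipartite: $a_D\ne0$ and $a_i=0$ for $0\le i\le D-1$. For $\theta\in\mathbb{R}$ the pseudo cosine sequence for $\theta$ is the sequence of reals $\sigma_0,\dots,\sigma_D$ with $\sigma_0=1$ and $c_i\sigma_{i-1}+a_i\sigma_i+b_i\sigma_{i+1}=\theta\sigma_i$ for $0\le i\le D-1$. Reals $\theta,\theta'$ form a tight pair if, with $\sigma_i$, $\rho_i$ their pseudo cosine sequences, $(\sigma_i\rho_i)_{i=0}^D$ is a pseudo cosine sequence. *)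

theory Defs
  imports Complex_Main
begin

definition simple_graph :: "'v set \<Rightarrow> ('v \<Rightarrow> 'v \<Rightarrow> bool) \<Rightarrow> bool" where
  "simple_graph V E \<longleftrightarrow> finite V \<and> V \<noteq> {} \<and>
     (\<forall>x y. E x y \<longrightarrow> x \<in> V \<and> y \<in> V) \<and>
     (\<forall>x y. E x y \<longrightarrow> E y x) \<and> (\<forall>x. \<not> E x x)"

definition walk_len :: "('v \<Rightarrow> 'v \<Rightarrow> bool) \<Rightarrow> nat \<Rightarrow> 'v \<Rightarrow> 'v \<Rightarrow> bool" where
  "walk_len E n x y \<longleftrightarrow>
     (\<exists>f :: nat \<Rightarrow> 'v. f 0 = x \<and> f n = y \<and> (\<forall>i<n. E (f i) (f (Suc i))))"

definition graph_connected :: "'v set \<Rightarrow> ('v \<Rightarrow> 'v \<Rightarrow> bool) \<Rightarrow> bool" where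
  "graph_connected V E \<longleftrightarrow> (\<forall>x\<in>V. \<forall>y\<in>V. \<exists>n. walk_len E n x y)"

definition gdist :: "('v \<Rightarrow> 'v \<Rightarrow> bool) \<Rightarrow> 'v \<Rightarrow> 'v \<Rightarrow> nat" where
  "gdist E x y = (LEAST n. walk_len E n x y)"

definition diameter :: "'v set \<Rightarrow> ('v \<Rightarrow> 'v \<Rightarrow> bool) \<Rightarrow> nat" where
  "diameter V E = Max {gdist E x y | x y. x \<in> V \<and> y \<in> V}"

definition distance_regular ::
  "'v set \<Rightarrow> ('v \<Rightarrow> 'v \<Rightarrow> bool) \<Rightarrow> nat \<Rightarrow> nat \<Rightarrow>
   (nat \<Rightarrow> nat) \<Rightarrow> (nat \<Rightarrow> nat) \<Rightarrow> (nat \<Rightarrow> nat) \<Rightarrow> bool" where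
  "distance_regular V E D k a b c \<longleftrightarrow>
     simple_graph V E \<and> graph_connected V E \<and> D = diameter V E \<and>
     (\<forall>x\<in>V. card {z. E x z} = k) \<and>
     c 0 = 0 \<and> b D = 0 \<and>
     (\<forall>x\<in>V. \<forall>y\<in>V.
        (gdist E x y \<ge> 1 \<longrightarrow> card {z. E y z \<and> gdist E x z = gdist E x y - 1} = c (gdist E x y)) \<and>
        card {z. E y z \<and> gdist E x z = gdist E x y} = a (gdist E x y) \<and>
        card {z. E y z \<and> gdist E x z = gdist E x y + 1} = b (gdist E x y))"

definition bipartite_drg :: "nat \<Rightarrow> (nat \<Rightarrow> nat) \<Rightarrow> bool" where
  "bipartite_drg D a \<longleftrightarrow> (\<forall>i\<le>D. a i = 0)"

definition almost_bipartite_drg :: "nat \<Rightarrow> (nat \<Rightarrow> nat) \<Rightarrow> bool" where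
  "almost_bipartite_drg D a \<longleftrightarrow> a D \<noteq> 0 \<and> (\<forall>i<D. a i = 0)"

text \<open>Pseudo cosine sequence sigma_0..sigma_D for theta (values beyond D are irrelevant;
  for i = 0 the term c 0 * sigma (0-1) vanishes since c 0 = 0).\<close>
definition pseudo_cosine_seq ::
  "nat \<Rightarrow> (nat \<Rightarrow> nat) \<Rightarrow> (nat \<Rightarrow> nat) \<Rightarrow> (nat \<Rightarrow> nat) \<Rightarrow> real \<Rightarrow> (nat \<Rightarrow> real) \<Rightarrow> bool" where
  "pseudo_cosine_seq D a b c \<theta> \<sigma> \<longleftrightarrow> \<sigma> 0 = 1 \<and>
     (\<forall>i. i \<le> D - 1 \<longrightarrow>
        real (c i) * (if i = 0 then 0 else \<sigma> (i - 1)) + real (a i) * \<sigma> i + real (b i) * \<sigma> (Suc i) = \<theta> * \<sigma> i)"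

definition tight_pair ::
  "nat \<Rightarrow> (nat \<Rightarrow> nat) \<Rightarrow> (nat \<Rightarrow> nat) \<Rightarrow> (nat \<Rightarrow> nat) \<Rightarrow> real \<Rightarrow> real \<Rightarrow> bool" where
  "tight_pair D a b c \<theta> \<theta>' \<longleftrightarrow>
     (\<exists>\<sigma> \<rho>. pseudo_cosine_seq D a b c \<theta> \<sigma> \<and> pseudo_cosine_seq D a b c \<theta>' \<rho> \<and>
        (\<exists>\<eta>. pseudo_cosine_seq D a b c \<eta> (\<lambda>i. \<sigma> i * \<rho> i)))"

end

theory Submission
  imports Defs
begin


lemma walk_cat:
  assumes "walk_len E m x z" "walk_len E p z y"
  shows "walk_len E (m+p) x y"
proof -
  obtain f where f: "f 0 = x" "f m = z" "\<forall>i<m. E (f i) (f (Suc i))"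
    using assms(1) unfolding walk_len_def by blast
  obtain g where g: "g 0 = z" "g p = y" "\<forall>i<p. E (g i) (g (Suc i))"
    using assms(2) unfolding walk_len_def by blast
  define h where "h i = (if i \<le> m then f i else g (i - m))" for i
  have h1: "h i = g (i - m)" if "i \<ge> m" for i
    using that f(2) g(1) by (cases "i = m") (auto simp: h_def)
  have "h 0 = x" using f by (simp add: h_def)
  moreover have "h (m+p) = y" using h1[of "m+p"] g(2) by simp
  moreover have "\<forall>i<m+p. E (h i) (h (Suc i))"
  proof (intro allI impI)
    fix i assume i: "i < m+p"
    show "E (h i) (h (Suc i))"
    proof (cases "i < m")
      case True then show ?thesis using f(3) by (simp add: h_def)
    next
      case False
      then have "h i = g (i-m)" "h (Suc i) = g (Suc (i-m))" using h1[of i] h1[of "Suc i"]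
        by (auto simp: Suc_diff_le)
      then show ?thesis using g(3) i False by auto
    qed
  qed
  ultimately show ?thesis unfolding walk_len_def by blast
qed

lemma walk0: "walk_len E 0 x y \<longleftrightarrow> x = y"
  unfolding walk_len_def by auto

lemma walk1: "walk_len E 1 x y \<longleftrightarrow> E x y"
proof
  assume "walk_len E 1 x y" then show "E x y" unfolding walk_len_def by auto
next
  assume "E x y"
  then show "walk_len E 1 x y" unfolding walk_len_def
    by (rule_tac x="\<lambda>i. if i = 0 then x else y" in exI) auto
qed

lemma gd_le: "walk_len E n x y \<Longrightarrow> gdist E x y \<le> n"
  unfolding gdist_def by (rule Least_le)

lemma gd_walk: "\<exists>n. walk_len E n x y \<Longrightarrow> walk_len E (gdist E x y) x y"
  unfolding gdist_def by (rule LeastI_ex)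

lemma conn_walk: "graph_connected V E \<Longrightarrow> x \<in> V \<Longrightarrow> y \<in> V \<Longrightarrow> walk_len E (gdist E x y) x y"
  unfolding graph_connected_def by (blast intro: gd_walk)

lemma gd_self: "gdist E x x = 0"
  using gd_le[of E 0 x x] walk0[of E x x] by simp

lemma gd_zero:
  assumes "graph_connected V E" "x \<in> V" "z \<in> V" "gdist E x z = 0" shows "z = x"
proof -
  have "walk_len E 0 x z" using conn_walk[OF assms(1-3)] assms(4) by simp
  then show ?thesis unfolding walk0 by simp
qed

lemma sg_in: "simple_graph V E \<Longrightarrow> E x y \<Longrightarrow> x \<in> V \<and> y \<in> V"
  unfolding simple_graph_def by blast

lemma tri1:
  assumes "graph_connected V E" "x \<in> V" "y \<in> V" "E y z"
  shows "gdist E x z \<le> gdist E x y + 1"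
proof -
  have "walk_len E 1 y z" using walk1 assms(4) by metis
  then have "walk_len E (gdist E x y + 1) x z" using walk_cat[OF conn_walk[OF assms(1-3)], of 1 z] by blast
  then show ?thesis by (rule gd_le)
qed

lemma tri2:
  assumes "simple_graph V E" "graph_connected V E" "x \<in> V" "y \<in> V" "E y z"
  shows "gdist E x y \<le> gdist E x z + 1"
proof -
  have "E z y" "z \<in> V" using assms(1,5) unfolding simple_graph_def by blast+
  then show ?thesis using tri1[OF assms(2,3) \<open>z \<in> V\<close>] by blast
qed

lemma geodesic:
  assumes "simple_graph V E" "graph_connected V E" "x \<in> V" "y \<in> V"
  shows "\<exists>f. f 0 = x \<and> f (gdist E x y) = y \<and> (\<forall>i<gdist E x y. E (f i) (f (Suc i))) \<and>
           (\<forall>j\<le>gdist E x y. gdist E x (f j) = j \<and> f j \<in> V)"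
proof -
  let ?d = "gdist E x y"
  obtain f where f: "f 0 = x" "f ?d = y" "\<forall>i<?d. E (f i) (f (Suc i))"
    using conn_walk[OF assms(2-4)] unfolding walk_len_def by blast
  have V: "f j \<in> V" if "j \<le> ?d" for j
  proof (cases j)
    case 0 then show ?thesis using f assms by simp
  next
    case (Suc j')
    then have "j' < ?d" using that by simp
    then have "E (f j') (f (Suc j'))" using f(3) by blast
    then show ?thesis using sg_in[OF assms(1)] Suc by blast
  qed
  have "gdist E x (f j) = j" if j: "j \<le> ?d" for j
  proof -
    have w1: "walk_len E j x (f j)" unfolding walk_len_def using f j by auto
    have w2: "walk_len E (?d - j) (f j) y" unfolding walk_len_def
      using f j by (rule_tac x="\<lambda>i. f (i + j)" in exI) auto
    have le: "gdist E x (f j) \<le> j" using gd_le[OF w1] .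
    have "walk_len E (gdist E x (f j) + (?d - j)) x y"
      using walk_cat[OF conn_walk[OF assms(2,3) V[OF j]] w2] .
    then have "?d \<le> gdist E x (f j) + (?d - j)" by (rule gd_le)
    then show ?thesis using le j by linarith
  qed
  then show ?thesis using f V by blast
qed



lemma drg_facts:
  assumes dr: "distance_regular V E D k a b c" and D1: "D \<ge> 1"
  shows "a 0 = 0 \<and> b 0 = k \<and> c 1 = 1 \<and> (\<forall>j<D. b j > 0) \<and>
         (\<forall>i. 1 \<le> i \<and> i < D \<longrightarrow> c i + a i + b i = k)"
proof -
  have sg: "simple_graph V E" and cn: "graph_connected V E" and Dd: "D = diameter V E"
    and kk: "\<forall>x\<in>V. card {z. E x z} = k"
    and reg: "\<forall>x\<in>V. \<forall>y\<in>V.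
        (gdist E x y \<ge> 1 \<longrightarrow> card {z. E y z \<and> gdist E x z = gdist E x y - 1} = c (gdist E x y)) \<and>
        card {z. E y z \<and> gdist E x z = gdist E x y} = a (gdist E x y) \<and>
        card {z. E y z \<and> gdist E x z = gdist E x y + 1} = b (gdist E x y)"
    using dr unfolding distance_regular_def by blast+
  have finV: "finite V" "V \<noteq> {}" using sg unfolding simple_graph_def by blast+
  have irr: "\<not> E z z" for z using sg unfolding simple_graph_def by blast
  have symm: "E u v \<Longrightarrow> E v u" for u v using sg unfolding simple_graph_def by blast
  have nbV: "{z. E y z} \<subseteq> V" for y using sg_in[OF sg] by blast
  have finN: "finite {z. E y z \<and> P z}" for y P
    by (rule finite_subset[OF _ finV(1)]) (use nbV in blast)
  let ?S = "{gdist E x y | x y. x \<in> V \<and> y \<in> V}"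
  have Seq: "?S = (\<lambda>p. gdist E (fst p) (snd p)) ` (V \<times> V)" by force
  have "finite ?S" unfolding Seq using finV by simp
  moreover have "?S \<noteq> {}" unfolding Seq using finV by simp
  ultimately have "Max ?S \<in> ?S" by (rule Max_in)
  then have "D \<in> ?S" unfolding Dd diameter_def .
  then have "D \<in> (\<lambda>p. gdist E (fst p) (snd p)) ` (V \<times> V)" unfolding Seq .
  then obtain p where p: "p \<in> V \<times> V" "D = gdist E (fst p) (snd p)" by blast
  define x where "x = fst p"
  define y where "y = snd p"
  have xy: "x \<in> V" "y \<in> V" "gdist E x y = D" using p unfolding x_def y_def by auto
  have Rc: "card {z. E w z \<and> gdist E x z = gdist E x w - 1} = c (gdist E x w)"
    if "w \<in> V" "gdist E x w \<ge> 1" for w using reg xy(1) that by blast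
  have Ra: "card {z. E w z \<and> gdist E x z = gdist E x w} = a (gdist E x w)"
    if "w \<in> V" for w using reg xy(1) that by blast
  have Rb: "card {z. E w z \<and> gdist E x z = gdist E x w + 1} = b (gdist E x w)"
    if "w \<in> V" for w using reg xy(1) that by blast
  have Rk: "card {z. E w z} = k" if "w \<in> V" for w using kk that by blast
  obtain f where f0: "f 0 = x" and fE: "\<And>i. i < D \<Longrightarrow> E (f i) (f (Suc i))"
     and fd: "\<And>j. j \<le> D \<Longrightarrow> gdist E x (f j) = j" and fV: "\<And>j. j \<le> D \<Longrightarrow> f j \<in> V"
    using geodesic[OF sg cn xy(1,2)] unfolding xy(3) by blast
  have bpos: "\<forall>j<D. b j > 0"
  proof (intro allI impI)
    fix j assume j: "j < D"
    have mem: "f (Suc j) \<in> {z. E (f j) z \<and> gdist E x z = gdist E x (f j) + 1}"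
      using fE[OF j] fd[of j] fd[of "Suc j"] j by simp
    have fin: "finite {z. E (f j) z \<and> gdist E x z = gdist E x (f j) + 1}" by (rule finN)
    have "card {z. E (f j) z \<and> gdist E x z = gdist E x (f j) + 1} > 0"
      using fin mem by (subst card_gt_0_iff) blast
    then have "b (gdist E x (f j)) > 0" using Rb[OF fV[of j]] j by simp
    then show "b j > 0" using fd[of j] j by simp
  qed
  have gx: "gdist E x x = 0" by (rule gd_self)
  have a0: "a 0 = 0"
  proof -
    have "{z. E x z \<and> gdist E x z = gdist E x x} = {}"
    proof (intro set_eqI iffI)
      fix z assume z: "z \<in> {z. E x z \<and> gdist E x z = gdist E x x}"
      then have "z \<in> V" using nbV by blast
      then have "z = x" using gd_zero[OF cn xy(1)] z gx by simp
      then show "z \<in> {}" using z irr by simp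
    qed simp
    then have "card {z. E x z \<and> gdist E x z = gdist E x x} = 0" by (simp only: card.empty)
    then show ?thesis using Ra[OF xy(1)] gx by metis
  qed
  have b0: "b 0 = k"
  proof -
    have "{z. E x z \<and> gdist E x z = gdist E x x + 1} = {z. E x z}"
    proof (intro set_eqI iffI)
      fix z assume z: "z \<in> {z. E x z}"
      then have Ez: "E x z" by simp
      then have "walk_len E 1 x z" using walk1 by metis
      then have "gdist E x z \<le> 1" by (rule gd_le)
      moreover have "z \<in> V" using nbV z by blast
      then have "gdist E x z \<noteq> 0" using gd_zero[OF cn xy(1)] Ez irr by metis
      ultimately show "z \<in> {z. E x z \<and> gdist E x z = gdist E x x + 1}" using Ez gx by simp
    qed simp
    then show ?thesis using Rb[OF xy(1)] gx Rk[OF xy(1)] by simp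
  qed
  have c1: "c 1 = 1"
  proof -
    have d1: "gdist E x (f 1) = 1" "f 1 \<in> V" using fd[of 1] fV[of 1] D1 by auto
    have Ex: "E (f 1) x" using fE[of 0] f0 D1 symm by simp
    have "{z. E (f 1) z \<and> gdist E x z = gdist E x (f 1) - 1} = {x}"
    proof (intro set_eqI iffI)
      fix z assume z: "z \<in> {z. E (f 1) z \<and> gdist E x z = gdist E x (f 1) - 1}"
      then have "z \<in> V" using nbV by blast
      then show "z \<in> {x}" using gd_zero[OF cn xy(1)] z d1 by simp
    next
      fix z assume "z \<in> {x}"
      then show "z \<in> {z. E (f 1) z \<and> gdist E x z = gdist E x (f 1) - 1}"
        using d1 gx Ex by simp
    qed
    then show ?thesis using Rc[OF d1(2)] d1 by simp
  qed
  have sum: "\<forall>i. 1 \<le> i \<and> i < D \<longrightarrow> c i + a i + b i = k"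
  proof (intro allI impI)
    fix i assume i: "1 \<le> i \<and> i < D"
    define w where "w = f i"
    have w: "w \<in> V" "gdist E x w = i" using fd[of i] fV[of i] i unfolding w_def by auto
    have split: "{z. E w z} = ({z. E w z \<and> gdist E x z = i - 1} \<union> {z. E w z \<and> gdist E x z = i})
        \<union> {z. E w z \<and> gdist E x z = i + 1}"
    proof (intro set_eqI iffI)
      fix z assume z: "z \<in> {z. E w z}"
      have "gdist E x z \<le> i + 1" using tri1[OF cn xy(1) w(1)] z w by auto
      moreover have "i \<le> gdist E x z + 1" using tri2[OF sg cn xy(1) w(1)] z w by auto
      ultimately show "z \<in> ({z. E w z \<and> gdist E x z = i - 1} \<union> {z. E w z \<and> gdist E x z = i})
        \<union> {z. E w z \<and> gdist E x z = i + 1}" using z by auto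
    qed auto
    have d1: "{z. E w z \<and> gdist E x z = i - 1} \<inter> {z. E w z \<and> gdist E x z = i} = {}" using i by auto
    have d2: "({z. E w z \<and> gdist E x z = i - 1} \<union> {z. E w z \<and> gdist E x z = i}) \<inter> {z. E w z \<and> gdist E x z = i + 1} = {}" using i by auto
    have "card {z. E w z} = card ({z. E w z \<and> gdist E x z = i - 1} \<union> {z. E w z \<and> gdist E x z = i})
        + card {z. E w z \<and> gdist E x z = i + 1}"
      unfolding split by (rule card_Un_disjoint[OF finite_UnI[OF finN finN] finN d2])
    also have "card ({z. E w z \<and> gdist E x z = i - 1} \<union> {z. E w z \<and> gdist E x z = i})
       = card {z. E w z \<and> gdist E x z = i - 1} + card {z. E w z \<and> gdist E x z = i}"
      by (rule card_Un_disjoint[OF finN finN d1])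
    finally have "k = c i + a i + b i" using Rk[OF w(1)] Rc[OF w(1)] Ra[OF w(1)] Rb[OF w(1)] w(2) i by simp
    then show "c i + a i + b i = k" by simp
  qed
  show ?thesis using a0 b0 c1 bpos sum by blast
qed

lemma alg1: fixes cc aa bb e s' k :: real
  assumes "cc * (- e) + aa * e + bb * s' = - k * e" "cc + aa + bb = k"
  shows "bb * s' = - (bb + 2 * aa) * e" using assms by algebra
lemma alg2: fixes cc aa bb e s' k :: real
  assumes "cc * e^2 + aa * e^2 + bb * s'^2 = k * e^2" "cc + aa + bb = k" "e^2 = 1"
  shows "bb * s'^2 = bb" using assms by algebra
lemma P1: fixes k A t B :: real
  assumes "B = k - 1 - A"
  shows "k * (1 + A) * (k * (1 + A) * t^2 + 2 * k * t + (k - A))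
       = (k * (1 + A) * t + k)^2 + k * A * B" unfolding assms by algebra
lemma P0: fixes k A t B :: real
  assumes "A = 0" "(t - 1)^2 * (k * (1 + A) * t^2 + 2 * k * t + (k - A)) = 0"
  shows "k * ((t - 1) * (t + 1))^2 = 0" using assms by algebra
lemma Pl: fixes k A t B s2 :: real
  assumes Bv: "B = k - 1 - A" and e1: "1 + A * t + B * s2 = (k * t) * t"
    and q1: "1 + A * t^2 + B * s2^2 = (k * t^2) * t^2"
  shows "(t - 1)^2 * (k * (1 + A) * t^2 + 2 * k * t + (k - A)) = 0"
proof -
  have x: "B * s2 = k * t * t - 1 - A * t" using e1 by linarith
  have y: "B * s2^2 = k * t^2 * t^2 - 1 - A * t^2" using q1 by linarith
  have "(B * s2)^2 = B * (B * s2^2)" by algebra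
  then have "(k * t * t - 1 - A * t)^2 = B * (k * t^2 * t^2 - 1 - A * t^2)" unfolding x y .
  then show ?thesis unfolding Bv by algebra
qed

lemma fin: fixes aa bb e s' :: real
  assumes aap: "aa > 0" and bb0: "bb \<ge> 0" and l1: "bb * s' = - (bb + 2 * aa) * e"
  and l2: "bb * s'^2 = bb" and e2: "e^2 = 1" shows False
proof -
    have "(bb * s')^2 = bb * (bb * s'^2)" by algebra
    also have "\<dots> = bb * bb" using l2 by simp
    finally have x1: "(bb * s')^2 = bb * bb" .
    have "(bb * s')^2 = (bb + 2 * aa)^2 * e^2" unfolding l1 by algebra
    then have x2: "(bb * s')^2 = (bb + 2 * aa)^2" using e2 by simp
    have x3: "(bb + 2 * aa)^2 - bb * bb = 4 * aa * (bb + aa)" by algebra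
    have x4: "4 * aa * (bb + aa) > 0" using aap bb0 by simp
    show False using x1 x2 x3 x4 by linarith
qed

theorem lemma6p1:
  fixes V :: "'v set" and E :: "'v \<Rightarrow> 'v \<Rightarrow> bool"
    and D k :: nat and a b c :: "nat \<Rightarrow> nat" and \<theta> \<theta>' :: real
  assumes "distance_regular V E D k a b c"
    and "D \<ge> 3"
    and "\<not> bipartite_drg D a"
    and "\<not> almost_bipartite_drg D a"
    and "\<theta> \<noteq> real k" and "\<theta>' \<noteq> real k"
    and "tight_pair D a b c \<theta> \<theta>'"
  shows "\<theta> \<noteq> \<theta>'"
proof
  assume eqt: "\<theta> = \<theta>'"
  have F: "a 0 = 0 \<and> b 0 = k \<and> c 1 = 1 \<and> (\<forall>j<D. b j > 0) \<and>
         (\<forall>i. 1 \<le> i \<and> i < D \<longrightarrow> c i + a i + b i = k)"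
    using drg_facts[OF assms(1)] assms(2) by simp
  have a0: "a 0 = 0" and b0: "b 0 = k" and c1: "c 1 = 1" and bpos: "\<And>j. j < D \<Longrightarrow> b j > 0"
    and sm: "\<And>i. 1 \<le> i \<Longrightarrow> i < D \<Longrightarrow> c i + a i + b i = k" using F by auto
  obtain \<sigma> \<rho> \<eta> where ps: "pseudo_cosine_seq D a b c \<theta> \<sigma>" and pr: "pseudo_cosine_seq D a b c \<theta> \<rho>"
    and pe: "pseudo_cosine_seq D a b c \<eta> (\<lambda>i. \<sigma> i * \<rho> i)"
    using assms(7) eqt unfolding tight_pair_def by blast
  have Es: "\<And>i. i < D \<Longrightarrow> real (c i) * (if i = 0 then 0 else \<sigma> (i - 1)) + real (a i) * \<sigma> i + real (b i) * \<sigma> (Suc i) = \<theta> * \<sigma> i"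
    and s0: "\<sigma> 0 = 1" using ps unfolding pseudo_cosine_seq_def by auto
  have Er: "\<And>i. i < D \<Longrightarrow> real (c i) * (if i = 0 then 0 else \<rho> (i - 1)) + real (a i) * \<rho> i + real (b i) * \<rho> (Suc i) = \<theta> * \<rho> i"
    and r0: "\<rho> 0 = 1" using pr unfolding pseudo_cosine_seq_def by auto
  have Ee: "\<And>i. i < D \<Longrightarrow> real (c i) * (if i = 0 then 0 else \<sigma> (i - 1) * \<rho> (i - 1)) + real (a i) * (\<sigma> i * \<rho> i) + real (b i) * (\<sigma> (Suc i) * \<rho> (Suc i)) = \<eta> * (\<sigma> i * \<rho> i)"
    using pe unfolding pseudo_cosine_seq_def by auto
  have sr: "\<sigma> j = \<rho> j \<and> \<sigma> (Suc j) = \<rho> (Suc j)" if "j < D" for j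
    using that
  proof (induction j)
    case 0
    have h1: "real (a 0) + real (b 0) * \<sigma> (Suc 0) = \<theta>" using Es[OF 0] s0 by simp
    have h2: "real (a 0) + real (b 0) * \<rho> (Suc 0) = \<theta>" using Er[OF 0] r0 by simp
    have "real (b 0) * (\<sigma> (Suc 0) - \<rho> (Suc 0)) = 0" using h1 h2 unfolding right_diff_distrib by linarith
    then have "\<sigma> (Suc 0) = \<rho> (Suc 0)" using bpos[OF 0] by simp
    then show ?case using s0 r0 by simp
  next
    case (Suc j)
    then have ih: "\<sigma> j = \<rho> j" "\<sigma> (Suc j) = \<rho> (Suc j)" by auto
    have h1: "real (c (Suc j)) * \<rho> j + real (a (Suc j)) * \<rho> (Suc j) + real (b (Suc j)) * \<sigma> (Suc (Suc j)) = \<theta> * \<rho> (Suc j)"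
      using Es[OF Suc.prems] ih by simp
    have h2: "real (c (Suc j)) * \<rho> j + real (a (Suc j)) * \<rho> (Suc j) + real (b (Suc j)) * \<rho> (Suc (Suc j)) = \<theta> * \<rho> (Suc j)"
      using Er[OF Suc.prems] by simp
    have "real (b (Suc j)) * (\<sigma> (Suc (Suc j)) - \<rho> (Suc (Suc j))) = 0"
      using h1 h2 unfolding right_diff_distrib by linarith
    then show ?case using bpos[OF Suc.prems] ih by simp
  qed
  define s where "s = \<sigma>"
  have E: "\<And>i. i < D \<Longrightarrow> real (c i) * (if i = 0 then 0 else s (i - 1)) + real (a i) * s i + real (b i) * s (Suc i) = \<theta> * s i"
    using Es unfolding s_def by blast
  have Q: "\<And>i. i < D \<Longrightarrow> real (c i) * (if i = 0 then 0 else s (i - 1)^2) + real (a i) * s i ^2 + real (b i) * s (Suc i)^2 = \<eta> * s i^2"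
  proof -
    fix i assume i: "i < D"
    have "i > 0 \<Longrightarrow> \<rho> (i - 1) = \<sigma> (i-1)" using sr[of "i-1"] i by auto
    then show "?thesis i" using Ee[OF i] sr[OF i] unfolding s_def by (auto simp: power2_eq_square)
  qed
  have s00: "s 0 = 1" using s0 s_def by simp
  have ex: "\<exists>i0. i0 < D \<and> a i0 \<noteq> 0"
  proof (rule ccontr)
    assume n: "\<not> (\<exists>i0. i0 < D \<and> a i0 \<noteq> 0)"
    obtain i where i: "i \<le> D" "a i \<noteq> 0" using assms(3) unfolding bipartite_drg_def by blast
    have "i = D" using i n le_neq_implies_less by blast
    then have "almost_bipartite_drg D a" unfolding almost_bipartite_drg_def using i n by blast
    then show False using assms(4) by blast
  qed
  have "\<exists>m. (m < D \<and> a m \<noteq> 0) \<and> (\<forall>j<m. \<not> (j < D \<and> a j \<noteq> 0))"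
    using exists_least_iff[of "\<lambda>j. j < D \<and> a j \<noteq> 0"] ex by blast
  then obtain m where m0: "m < D" "a m \<noteq> 0" "\<forall>j<m. \<not> (j < D \<and> a j \<noteq> 0)" by blast
  have m: "m < D" "a m \<noteq> 0" "\<And>j. j < m \<Longrightarrow> a j = 0"
    using m0 by auto
  have m1: "m \<ge> 1" using m a0 by (cases m) auto
  define t where "t = s 1"
  have kpos: "real k > 0" using bpos[of 0] b0 assms(2) by simp
  have th: "\<theta> = real k * t" using E[of 0] a0 b0 s00 assms(2) unfolding t_def by simp
  have et: "\<eta> = real k * t^2" using Q[of 0] a0 b0 s00 assms(2) unfolding t_def by simp
  have t1: "t \<noteq> 1" using th assms(5) by auto
  define A where "A = real (a 1)"
  define B where "B = real (b 1)"
  define s2 where "s2 = s 2"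
  have Bv: "B = real k - 1 - A" using sm[of 1] assms(2) c1 unfolding A_def B_def by simp
  have Bp: "B > 0" using bpos[of 1] assms(2) unfolding B_def by simp
  have e1: "1 + A * t + B * s2 = \<theta> * t" using E[of 1] assms(2) c1 s00
    unfolding A_def B_def s2_def t_def by (simp add: numeral_2_eq_2)
  have q1: "1 + A * t^2 + B * s2^2 = \<eta> * t^2" using Q[of 1] assms(2) c1 s00
    unfolding A_def B_def s2_def t_def by (simp add: numeral_2_eq_2)
  have P: "(t - 1)^2 * (real k * (1 + A) * t^2 + 2 * real k * t + (real k - A)) = 0"
    using Pl[OF Bv, of t s2] e1 q1 unfolding th et by simp
  show False
  proof (cases "m = 1")
    case True
    then have Ap: "A > 0" using m(2) unfolding A_def by simp
    have "real k * (1 + A) * (real k * (1 + A) * t^2 + 2 * real k * t + (real k - A))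
       = (real k * (1 + A) * t + real k)^2 + real k * A * B" by (rule P1[OF Bv])
    moreover have "real k * A * B > 0" using kpos Ap Bp by simp
    moreover have "real k * (1 + A) > 0" using kpos Ap by simp
    moreover have "(real k * (1 + A) * t + real k)^2 \<ge> 0" by simp
    ultimately have "real k * (1 + A) * (real k * (1 + A) * t^2 + 2 * real k * t + (real k - A)) > 0"
      by linarith
    then have "real k * (1 + A) * t^2 + 2 * real k * t + (real k - A) > 0"
      using \<open>real k * (1 + A) > 0\<close> zero_less_mult_pos by blast
    then have "(t - 1)^2 = 0" using P by simp
    then show False using t1 by simp
  next
    case False
    then have m2: "m \<ge> 2" using m1 by simp
    then have "A = 0" using m(3)[of 1] unfolding A_def by simp
    then have "real k * ((t - 1) * (t + 1))^2 = 0" using P0 P by blast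
    then have "(t - 1) * (t + 1) = 0" using kpos by simp
    then have tm: "t = -1" using t1 by simp
    then have th': "\<theta> = - real k" and et': "\<eta> = real k" using th et by auto
    have ind: "s j = (-1)^j \<and> s (Suc j) = (-1)^(Suc j)" if "Suc j \<le> m" for j
      using that
    proof (induction j)
      case 0 then show ?case using s00 tm t_def by simp
    next
      case (Suc j)
      then have ih: "s j = (-1)^j" "s (Suc j) = (-1)^(Suc j)" by auto
      have jD: "Suc j < D" and aj: "a (Suc j) = 0" using Suc.prems m by auto
      have sm1: "real (c (Suc j)) + real (b (Suc j)) = real k" using sm[of "Suc j"] jD aj by simp
      have e: "real (c (Suc j)) * s j + real (b (Suc j)) * s (Suc (Suc j)) = \<theta> * s (Suc j)"
        using E[OF jD] aj by simp
      define p where "p = ((-1)::real)^j"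
      have sj: "s j = p" "s (Suc j) = - p" using ih unfolding p_def by auto
      have e': "real (c (Suc j)) * p + real (b (Suc j)) * s (Suc (Suc j)) = real k * p"
        using e sj th' by simp
      have k1: "real k * p = real (c (Suc j)) * p + real (b (Suc j)) * p"
        unfolding sm1[symmetric] by (simp add: distrib_right)
      have "real (b (Suc j)) * s (Suc (Suc j)) = real (b (Suc j)) * p"
        using e' k1 by linarith
      then have "s (Suc (Suc j)) = p" using bpos[OF jD] by simp
      then show ?case using ih unfolding p_def by simp
    qed
    define e where "e = s m"
    have mm: "Suc (m - 1) = m" using m1 by simp
    have ii: "s (m - 1) = (-1)^(m-1)" "s m = (-1)^(Suc (m-1))" using ind[of "m - 1"] mm by auto
    have sme: "s (m - 1) = - e" using ii unfolding e_def by simp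
    have e2: "e^2 = 1" using ii unfolding e_def by (simp add: power_mult_distrib[symmetric] power_mult[symmetric])
    define s' where "s' = s (Suc m)"
    define aa where "aa = real (a m)"
    define bb where "bb = real (b m)"
    define cc where "cc = real (c m)"
    have sum3: "cc + aa + bb = real k" using sm[of m] m1 m(1) unfolding aa_def bb_def cc_def by simp
    have eq1: "cc * (- e) + aa * e + bb * s' = - real k * e" using E[OF m(1)] m1 sme th'
      unfolding aa_def bb_def cc_def s'_def e_def by simp
    have eq2: "cc * e^2 + aa * e^2 + bb * s'^2 = real k * e^2" using Q[OF m(1)] m1 sme et'
      unfolding aa_def bb_def cc_def s'_def e_def by simp
    have aap: "aa > 0" using m(2) unfolding aa_def by simp
    have bb0: "bb \<ge> 0" unfolding bb_def by simp
    have l1: "bb * s' = - (bb + 2 * aa) * e" using alg1[OF eq1 sum3] .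
    have l2: "bb * s'^2 = bb" using alg2[OF eq2 sum3 e2] .
    show False using fin[OF aap bb0 l1 l2 e2] .

  qed

qed

end
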